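(* Let $f=p/q$ be a rational function, $p,q$ of degree $l$, positive on the standard simplex $\Delta$, with $p>0$ on $\Delta$ and $b_\alpha(q,j,\Delta)>0$ for all $|\alpha|=j$, $j\ge l$. Let \[ D_1=\frac{\omega}{\min_{x\in\Delta}f(x)}+1,\qquad D_2=\frac{l(l-1)}{2}\,\frac{\max_{|\alpha|=l}|b_\alpha(p,l,\Delta)|}{\underline p}, \] where $\underline p=\min_\Delta p$. If $k>\max\{D_1,D_2\}$, then $f$ satisfies the global certificate of positivity $\mathrm{Cert}(b(f,k,\Delta))$: $b_\alpha(f,k,\Delta)\ge0$ for all $|\alpha|=k$ and $b_{k\hat e_i}(f,k,\Delta)>0$ for $i=0,\dots,n$.
   Context: $\Delta$ is the standard simplex with barycentric coordinates $\lambda=(1-\sum x_i,x_1,\dots,x_n)$; $B^{(k)}_\alpha=\frac{k!}{\alpha_0!\cdots\alpha_n!}\lambda^\alpha$; $b_\alpha(p,k,\Delta)$ Bernstein coefficients; $b_\alpha(f,k,\Delta)=b_\alpha(p,k,\Delta)/b_\alpha(q,k,\Delta)$; $\hat e_i$ unit vectors of $\mathbb{R}^{n+1}$. $\omega:=\frac{n(n+2)l(l-1)}{24\min_{|\alpha|=l}b_\alpha(q,l,\Delta)}\big(\|\nabla^2p\|_\infty+\zeta\|\nabla^2q\|_\infty\big)$ with $\zeta:=\max\{|\min_{|\alpha|=l}b_\alpha(f,l,\Delta)|,|\max_{|\alpha|=l}b_\alpha(f,l,\Delta)|\}$ and, with convention $\hat e_{-1}:=\hat e_n$, $\|\nabla^2p\|_\infty=\max_{|\gamma|=l-2,0\le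 i<j\le n}|b_{\gamma+\hat e_i+\hat e_{j-1}}+b_{\gamma+\hat e_{i-1}+\hat e_j}-b_{\gamma+\hat e_{i-1}+\hat e_{j-1}}-b_{\gamma+\hat e_i+\hat e_j}|$ for $b=b(p,l,\Delta)$, likewise for $q$. *)

theory Defs
  imports Complex_Main
begin

text \<open>Points of R^n are functions x :: nat => real; only x 1, ..., x n matter.
  Multi-indices alpha = (alpha_0, ..., alpha_n) are functions nat => nat vanishing beyond n.
  A polynomial in x_1..x_n is given by its coefficient function c on exponent vectors
  beta (beta 0 = 0, beta i = 0 for i > n).\<close>

definition simplex :: "nat \<Rightarrow> (nat \<Rightarrow> real) set" where
  "simplex n = {x. (\<forall>i. (i = 0 \<or> n < i) \<longrightarrow> x i = 0) \<and> (\<forall>i\<in>{1..n}. 0 \<le> x i)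
                  \<and> (\<Sum>i\<in>{1..n}. x i) \<le> 1}"

definition bary :: "nat \<Rightarrow> (nat \<Rightarrow> real) \<Rightarrow> nat \<Rightarrow> real" where
  "bary n x i = (if i = 0 then 1 - (\<Sum>j\<in>{1..n}. x j) else x i)"

definition multi_idx :: "nat \<Rightarrow> nat \<Rightarrow> (nat \<Rightarrow> nat) set" where
  "multi_idx n k = {\<alpha>. (\<forall>i>n. \<alpha> i = 0) \<and> (\<Sum>i\<in>{0..n}. \<alpha> i) = k}"

definition bernstein :: "nat \<Rightarrow> nat \<Rightarrow> (nat \<Rightarrow> nat) \<Rightarrow> (nat \<Rightarrow> real) \<Rightarrow> real" where
  "bernstein n k \<alpha> x = fact k / (\<Prod>i\<in>{0..n}. fact (\<alpha> i)) * (\<Prod>i\<in>{0..n}. bary n x i ^ \<alpha> i)"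

definition monomial_exps :: "nat \<Rightarrow> nat \<Rightarrow> (nat \<Rightarrow> nat) set" where
  "monomial_exps n l = {\<beta>. \<beta> 0 = 0 \<and> (\<forall>i>n. \<beta> i = 0) \<and> (\<Sum>i\<in>{1..n}. \<beta> i) \<le> l}"

definition is_poly :: "nat \<Rightarrow> nat \<Rightarrow> ((nat \<Rightarrow> nat) \<Rightarrow> real) \<Rightarrow> bool" where
  "is_poly n l c \<longleftrightarrow> (\<forall>\<beta>. c \<beta> \<noteq> 0 \<longrightarrow> \<beta> \<in> monomial_exps n l)"

definition peval :: "nat \<Rightarrow> ((nat \<Rightarrow> nat) \<Rightarrow> real) \<Rightarrow> (nat \<Rightarrow> real) \<Rightarrow> real" where
  "peval n c x = (\<Sum>\<beta>\<in>{\<beta>. c \<beta> \<noteq> 0}. c \<beta> * (\<Prod>i\<in>{1..n}. x i ^ \<beta> i))"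

text \<open>Bernstein coefficients b_alpha(p,k,Delta): the coefficients of p in the
  Bernstein basis of degree k (unique when deg p <= k).\<close>
definition bern_coeff :: "nat \<Rightarrow> ((nat \<Rightarrow> nat) \<Rightarrow> real) \<Rightarrow> nat \<Rightarrow> (nat \<Rightarrow> nat) \<Rightarrow> real" where
  "bern_coeff n c k = (THE b. (\<forall>\<alpha>. \<alpha> \<notin> multi_idx n k \<longrightarrow> b \<alpha> = 0) \<and>
      (\<forall>x. peval n c x = (\<Sum>\<alpha>\<in>multi_idx n k. b \<alpha> * bernstein n k \<alpha> x)))"

definition bern_coeff_f ::
  "nat \<Rightarrow> ((nat \<Rightarrow> nat) \<Rightarrow> real) \<Rightarrow> ((nat \<Rightarrow> nat) \<Rightarrow> real) \<Rightarrow> nat \<Rightarrow> (nat \<Rightarrow> nat) \<Rightarrow> real" where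
  "bern_coeff_f n p q k \<alpha> = bern_coeff n p k \<alpha> / bern_coeff n q k \<alpha>"

text \<open>Index shift with convention e_{-1} = e_n.\<close>
definition prev_idx :: "nat \<Rightarrow> nat \<Rightarrow> nat" where
  "prev_idx n i = (if i = 0 then n else i - 1)"

definition add2 :: "(nat \<Rightarrow> nat) \<Rightarrow> nat \<Rightarrow> nat \<Rightarrow> (nat \<Rightarrow> nat)" where
  "add2 \<gamma> i j = (\<lambda>t. \<gamma> t + (if t = i then 1 else 0) + (if t = j then 1 else 0))"

definition hess_norm :: "nat \<Rightarrow> nat \<Rightarrow> ((nat \<Rightarrow> nat) \<Rightarrow> real) \<Rightarrow> real" where
  "hess_norm n l b = Max {\<bar>b (add2 \<gamma> i (prev_idx n j)) + b (add2 \<gamma> (prev_idx n i) j)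
        - b (add2 \<gamma> (prev_idx n i) (prev_idx n j)) - b (add2 \<gamma> i j)\<bar> | \<gamma> i j.
        \<gamma> \<in> multi_idx n (l - 2) \<and> i < j \<and> j \<le> n}"

definition omega :: "nat \<Rightarrow> nat \<Rightarrow> ((nat \<Rightarrow> nat) \<Rightarrow> real) \<Rightarrow> ((nat \<Rightarrow> nat) \<Rightarrow> real) \<Rightarrow> real" where
  "omega n l p q =
    (let bf = bern_coeff_f n p q l;
         \<zeta> = max \<bar>Min (bf ` multi_idx n l)\<bar> \<bar>Max (bf ` multi_idx n l)\<bar>
     in real (n * (n + 2) * l * (l - 1)) / (24 * Min (bern_coeff n q l ` multi_idx n l))
        * (hess_norm n l (bern_coeff n p l) + \<zeta> * hess_norm n l (bern_coeff n q l)))"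

definition unit_mult :: "nat \<Rightarrow> nat \<Rightarrow> (nat \<Rightarrow> nat)" where
  "unit_mult k i = (\<lambda>t. if t = i then k else 0)"

definition Cert :: "nat \<Rightarrow> nat \<Rightarrow> ((nat \<Rightarrow> nat) \<Rightarrow> real) \<Rightarrow> bool" where
  "Cert n k b \<longleftrightarrow> (\<forall>\<alpha>\<in>multi_idx n k. 0 \<le> b \<alpha>) \<and> (\<forall>i\<le>n. 0 < b (unit_mult k i))"

end

theory Submission
  imports Defs "HOL-Analysis.Function_Topology" "HOL-Combinatorics.Multiset_Permutations"
begin


definition LS :: "'a set \<Rightarrow> nat \<Rightarrow> 'a list set" where
  "LS A m = {xs. length xs = m \<and> set xs \<subseteq> A}"

definition cnt :: "nat list \<Rightarrow> nat \<Rightarrow> nat" where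
  "cnt ts = (\<lambda>i. count (mset ts) i)"

definition PL :: "(nat \<Rightarrow> real) \<Rightarrow> nat list \<Rightarrow> real" where
  "PL y ts = prod_list (map y ts)"

lemma finite_LS: "finite A \<Longrightarrow> finite (LS A m)"
proof -
  assume "finite A"
  have "LS A m = {xs. set xs \<subseteq> A \<and> length xs = m}" unfolding LS_def by auto
  thus ?thesis using finite_lists_length_eq[OF \<open>finite A\<close>] by simp
qed

lemma card_LS: "finite A \<Longrightarrow> card (LS A m) = card A ^ m"
proof -
  assume "finite A"
  have "LS A m = {xs. set xs \<subseteq> A \<and> length xs = m}" unfolding LS_def by auto
  thus ?thesis using card_lists_length_eq[OF \<open>finite A\<close>] by simp
qed

lemma LS_Suc: "LS A (Suc m) = (\<lambda>(a,vs). a # vs) ` (A \<times> LS A m)"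
  unfolding LS_def
  by (auto simp: length_Suc_conv image_iff) 

lemma sum_LS_Suc:
  fixes f :: "'a list \<Rightarrow> 'b::comm_monoid_add"
  assumes "finite A"
  shows "(\<Sum>ts\<in>LS A (Suc m). f ts) = (\<Sum>a\<in>A. \<Sum>vs\<in>LS A m. f (a # vs))"
proof -
  have inj: "inj_on (\<lambda>(a,vs). a # vs) (A \<times> LS A m)" by (auto simp: inj_on_def)
  have "(\<Sum>ts\<in>LS A (Suc m). f ts) = (\<Sum>p\<in>A \<times> LS A m. f ((\<lambda>(a,vs). a # vs) p))"
    unfolding LS_Suc by (rule sum.reindex[OF inj, unfolded comp_def])
  also have "\<dots> = (\<Sum>a\<in>A. \<Sum>vs\<in>LS A m. f (a # vs))"
    by (simp add: sum.cartesian_product case_prod_unfold)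
  finally show ?thesis .
qed

lemma LS_0: "LS A 0 = {[]}" unfolding LS_def by auto

lemma sum_PL_LS:
  assumes "finite A"
  shows "(\<Sum>vs\<in>LS A m. PL y vs) = (\<Sum>i\<in>A. y i) ^ m"
proof (induction m)
  case 0 then show ?case by (simp add: LS_0 PL_def)
next
  case (Suc m)
  have "(\<Sum>vs\<in>LS A (Suc m). PL y vs) = (\<Sum>a\<in>A. \<Sum>vs\<in>LS A m. y a * PL y vs)"
    by (simp add: sum_LS_Suc[OF assms] PL_def)
  also have "\<dots> = (\<Sum>a\<in>A. y a * (\<Sum>i\<in>A. y i) ^ m)"
    by (simp add: sum_distrib_left[symmetric] Suc)
  also have "\<dots> = (\<Sum>i\<in>A. y i) ^ Suc m" by (simp add: sum_distrib_right[symmetric])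
  finally show ?case .
qed

lemma PL_count:
  assumes "set ts \<subseteq> {0..n}"
  shows "PL y ts = (\<Prod>i\<in>{0..n}. y i ^ cnt ts i)"
  using assms
proof (induction ts)
  case Nil then show ?case by (simp add: PL_def cnt_def)
next
  case (Cons a ts)
  have a: "a \<in> {0..n}" using Cons.prems by auto
  have "(\<Prod>i\<in>{0..n}. y i ^ cnt (a # ts) i) = (\<Prod>i\<in>{0..n}. (if i = a then y i else 1) * y i ^ cnt ts i)"
    by (intro prod.cong) (auto simp: cnt_def)
  also have "\<dots> = y a * (\<Prod>i\<in>{0..n}. y i ^ cnt ts i)"
    using a by (simp add: prod.distrib prod.delta)
  finally show ?case using Cons by (simp add: PL_def)
qed

lemma sum_cnt:
  assumes "set ts \<subseteq> {0..n}"
  shows "(\<Sum>i\<in>{0..n}. cnt ts i) = length ts"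
  using assms
proof (induction ts)
  case Nil then show ?case by (simp add: cnt_def)
next
  case (Cons a ts)
  have a: "a \<in> {0..n}" using Cons.prems by auto
  have "(\<Sum>i\<in>{0..n}. cnt (a # ts) i) = (\<Sum>i\<in>{0..n}. (if i = a then 1 else 0) + cnt ts i)"
    by (intro sum.cong) (auto simp: cnt_def)
  also have "\<dots> = 1 + (\<Sum>i\<in>{0..n}. cnt ts i)"
    using a by (simp add: sum.distrib)
  finally show ?case using Cons by simp
qed

lemma cnt_out: "set ts \<subseteq> {0..n} \<Longrightarrow> n < i \<Longrightarrow> cnt ts i = 0"
  unfolding cnt_def by (auto simp: count_eq_zero_iff)

lemma cnt_multi_idx: "ts \<in> LS {0..n} k \<Longrightarrow> cnt ts \<in> multi_idx n k"
  unfolding multi_idx_def LS_def using sum_cnt cnt_out by auto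

definition wl :: "nat \<Rightarrow> (nat \<Rightarrow> nat) \<Rightarrow> nat list" where
  "wl n \<alpha> = concat (map (\<lambda>i. replicate (\<alpha> i) i) [0..<Suc n])"

lemma set_wl: "set (wl n \<alpha>) \<subseteq> {0..n}"
  unfolding wl_def by auto

lemma length_wl: "length (wl n \<alpha>) = (\<Sum>i\<in>{0..n}. \<alpha> i)"
  unfolding wl_def by (simp add: length_concat sum_list_sum_nth atLeast0AtMost lessThan_Suc_atMost[symmetric] comp_def atLeast0LessThan)

lemma count_wl: "count (mset (wl n \<alpha>)) i = (if i \<le> n then \<alpha> i else 0)"
proof -
  have g: "count (mset (concat (map (\<lambda>j. replicate (\<alpha> j) j) js))) i
      = (\<Sum>j\<leftarrow>js. if j = i then \<alpha> j else 0)" for js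
    by (induction js) auto
  have "count (mset (wl n \<alpha>)) i = (\<Sum>j\<leftarrow>[0..<Suc n]. if j = i then \<alpha> j else 0)"
    unfolding wl_def by (rule g)
  also have "\<dots> = (\<Sum>j<Suc n. if j = i then \<alpha> j else 0)"
    by (simp add: sum_set_upt_conv_sum_list_nat[symmetric] atLeast0LessThan)
  also have "\<dots> = (if i \<le> n then \<alpha> i else 0)" by (simp add: sum.delta')
  finally show ?thesis .
qed

lemma cnt_wl: "\<alpha> \<in> multi_idx n k \<Longrightarrow> cnt (wl n \<alpha>) = \<alpha>"
  unfolding cnt_def multi_idx_def by (auto simp: count_wl not_le)

lemma wl_LS: "\<alpha> \<in> multi_idx n k \<Longrightarrow> wl n \<alpha> \<in> LS {0..n} k"
  unfolding LS_def multi_idx_def using set_wl length_wl by auto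

lemma finite_multi_idx: "finite (multi_idx n k)"
proof -
  have "multi_idx n k \<subseteq> cnt ` LS {0..n} k"
    using cnt_wl wl_LS by (metis image_eqI subsetI)
  thus ?thesis using finite_LS finite_subset by blast
qed



lemma PL_append: "PL y (us @ vs) = PL y us * PL y vs"
  unfolding PL_def by simp

lemma sum_take_split:
  fixes H :: "nat list \<Rightarrow> real" and A :: "nat set"
  assumes "finite A" "l \<le> k"
  shows "(\<Sum>ts\<in>LS A k. H (take l ts) * PL y ts)
       = (\<Sum>us\<in>LS A l. H us * PL y us) * (\<Sum>vs\<in>LS A (k - l). PL y vs)"
proof -
  let ?f = "\<lambda>(us, vs). us @ vs"
  have inj: "inj_on ?f (LS A l \<times> LS A (k - l))"
    by (auto simp: inj_on_def LS_def)
  have img: "?f ` (LS A l \<times> LS A (k - l)) = LS A k"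
  proof
    show "?f ` (LS A l \<times> LS A (k - l)) \<subseteq> LS A k"
      using assms(2) by (auto simp: LS_def)
  next
    show "LS A k \<subseteq> ?f ` (LS A l \<times> LS A (k - l))"
    proof
      fix ts assume ts: "ts \<in> LS A k"
      have "take l ts \<in> LS A l" "drop l ts \<in> LS A (k - l)"
        using ts assms(2) by (auto simp: LS_def min_def dest: in_set_takeD in_set_dropD)
      moreover have "ts = ?f (take l ts, drop l ts)" by simp
      ultimately show "ts \<in> ?f ` (LS A l \<times> LS A (k - l))" by blast
    qed
  qed
  have "(\<Sum>ts\<in>LS A k. H (take l ts) * PL y ts)
      = (\<Sum>p\<in>LS A l \<times> LS A (k - l). H (take l (?f p)) * PL y (?f p))"
    by (subst img[symmetric], subst sum.reindex[OF inj]) (simp add: comp_def)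
  also have "\<dots> = (\<Sum>p\<in>LS A l \<times> LS A (k - l). (H (fst p) * PL y (fst p)) * PL y (snd p))"
    by (intro sum.cong) (auto simp: LS_def PL_append)
  also have "\<dots> = (\<Sum>us\<in>LS A l. H us * PL y us) * (\<Sum>vs\<in>LS A (k - l). PL y vs)"
    by (simp add: sum_product sum.cartesian_product case_prod_unfold)
  finally show ?thesis .
qed

lemma PL_mset: "mset ts = mset ts' \<Longrightarrow> PL y ts = PL y ts'"
  unfolding PL_def by (metis mset_map prod_mset_prod_list)

lemma sum_sub_perm:
  fixes H :: "nat list \<Rightarrow> real" and A :: "nat set"
  assumes "distinct s" "length s = l" "set s \<subseteq> {..<k}"
  shows "(\<Sum>ts\<in>LS A k. H (map (nth ts) s) * PL y ts) = (\<Sum>ts\<in>LS A k. H (take l ts) * PL y ts)"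
proof (cases "finite A")
  case False
  have "infinite (LS A k)" if "k > 0"
  proof
    assume fin: "finite (LS A k)"
    have "(\<lambda>a. replicate k a) ` A \<subseteq> LS A k" by (auto simp: LS_def)
    moreover have "inj_on (\<lambda>a. replicate k a) A" using that by (auto simp: inj_on_def)
    ultimately show False using False fin by (meson finite_imageD finite_subset)
  qed
  moreover have "k = 0 \<Longrightarrow> s = []" using assms by auto
  ultimately show ?thesis using assms by (cases "k = 0") auto
next
  case fA: True
  define sl where "sl = s @ filter (\<lambda>j. j \<notin> set s) [0..<k]"
  have dsl: "distinct sl" unfolding sl_def using assms(1) by auto
  have ssl: "set sl = {..<k}" unfolding sl_def using assms(3) by auto
  have lsl: "length sl = k" using distinct_card[OF dsl] ssl by simp
  have msl: "mset sl = mset [0..<k]"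
  proof -
    have "set sl = set [0..<k]" using ssl by (simp only: set_upt atLeast0LessThan)
    moreover have "(set sl = set [0..<k]) = (mset sl = mset [0..<k])"
      by (rule set_eq_iff_mset_eq_distinct[OF dsl distinct_upt])
    ultimately show ?thesis by (rule rev_iffD1)
  qed
  define \<phi> where "\<phi> ts = map (nth ts) sl" for ts :: "nat list"
  have \<phi>LS: "\<phi> ts \<in> LS A k" if "ts \<in> LS A k" for ts
  proof -
    have l: "length ts = k" and sA: "set ts \<subseteq> A" using that by (auto simp: LS_def)
    have "set (\<phi> ts) \<subseteq> A"
    proof
      fix z assume "z \<in> set (\<phi> ts)"
      then obtain j where j: "j \<in> set sl" "z = ts ! j" unfolding \<phi>_def by auto
      have "j < length ts" using j(1) ssl l by auto
      hence "ts ! j \<in> set ts" by (rule nth_mem)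
      thus "z \<in> A" using j(2) sA by auto
    qed
    moreover have "length (\<phi> ts) = k" unfolding \<phi>_def using lsl by simp
    ultimately show ?thesis by (simp add: LS_def)
  qed
  have \<phi>m: "mset (\<phi> ts) = mset ts" if "ts \<in> LS A k" for ts
  proof -
    have "mset (\<phi> ts) = image_mset (nth ts) (mset sl)" unfolding \<phi>_def by simp
    also have "\<dots> = mset (map (nth ts) [0..<length ts])" using msl that by (simp add: LS_def)
    also have "\<dots> = mset ts" by (simp add: map_nth)
    finally show ?thesis .
  qed
  have \<phi>inj: "inj_on \<phi> (LS A k)"
  proof (rule inj_onI)
    fix ts ts' assume ts: "ts \<in> LS A k" and ts': "ts' \<in> LS A k" and eq: "\<phi> ts = \<phi> ts'"
    show "ts = ts'"
    proof (rule nth_equalityI)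
      show "length ts = length ts'" using ts ts' by (simp add: LS_def)
      fix j assume "j < length ts"
      hence "j \<in> set sl" using ts ssl by (simp add: LS_def)
      then obtain q where q: "q < length sl" "sl ! q = j" by (auto simp: in_set_conv_nth)
      have "\<phi> ts ! q = \<phi> ts' ! q" using eq by simp
      thus "ts ! j = ts' ! j" using q unfolding \<phi>_def by simp
    qed
  qed
  have \<phi>img: "\<phi> ` LS A k = LS A k"
    by (rule endo_inj_surj[OF finite_LS[OF fA] _ \<phi>inj]) (use \<phi>LS in auto)
  have "(\<Sum>ts\<in>LS A k. H (take l ts) * PL y ts) = (\<Sum>ts\<in>\<phi> ` LS A k. H (take l ts) * PL y ts)"
    using \<phi>img by simp
  also have "\<dots> = (\<Sum>ts\<in>LS A k. H (take l (\<phi> ts)) * PL y (\<phi> ts))"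
    by (subst sum.reindex[OF \<phi>inj]) (simp add: comp_def)
  also have "\<dots> = (\<Sum>ts\<in>LS A k. H (map (nth ts) s) * PL y ts)"
  proof (intro sum.cong refl)
    fix ts assume ts: "ts \<in> LS A k"
    have "take l (\<phi> ts) = map (nth ts) s" unfolding \<phi>_def sl_def using assms(2) by simp
    moreover have "PL y (\<phi> ts) = PL y ts" using \<phi>m[OF ts] by (rule PL_mset)
    ultimately show "H (take l (\<phi> ts)) * PL y (\<phi> ts) = H (map (nth ts) s) * PL y ts" by simp
  qed
  finally show ?thesis by simp
qed

definition fib :: "nat \<Rightarrow> nat \<Rightarrow> (nat \<Rightarrow> nat) \<Rightarrow> nat list set" where
  "fib n k \<alpha> = {ts \<in> LS {0..n} k. cnt ts = \<alpha>}"

lemma conv_sum: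
  fixes G :: "nat list \<Rightarrow> real"
  shows "(\<Sum>ts\<in>LS {0..n} k. G ts * PL y ts)
       = (\<Sum>\<alpha>\<in>multi_idx n k. (\<Sum>ts\<in>fib n k \<alpha>. G ts) * (\<Prod>i\<in>{0..n}. y i ^ \<alpha> i))"
proof -
  have "(\<Sum>\<alpha>\<in>multi_idx n k. (\<Sum>ts\<in>fib n k \<alpha>. G ts) * (\<Prod>i\<in>{0..n}. y i ^ \<alpha> i))
      = (\<Sum>\<alpha>\<in>multi_idx n k. (\<Sum>ts\<in>fib n k \<alpha>. G ts * (\<Prod>i\<in>{0..n}. y i ^ cnt ts i)))"
    by (intro sum.cong refl) (simp add: sum_distrib_right fib_def)
  also have "\<dots> = (\<Sum>ts\<in>LS {0..n} k. G ts * (\<Prod>i\<in>{0..n}. y i ^ cnt ts i))"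
    unfolding fib_def
    by (rule sum.group[OF finite_LS finite_multi_idx]) (use cnt_multi_idx in auto)
  also have "\<dots> = (\<Sum>ts\<in>LS {0..n} k. G ts * PL y ts)"
  proof (intro sum.cong refl)
    fix ts assume "ts \<in> LS {0..n} k"
    thus "G ts * (\<Prod>i\<in>{0..n}. y i ^ cnt ts i) = G ts * PL y ts"
      using PL_count[of ts n y] by (simp add: LS_def)
  qed
  finally show ?thesis by simp
qed

lemma fib_eq: "\<alpha> \<in> multi_idx n k \<Longrightarrow> fib n k \<alpha> = {ts. mset ts = mset (wl n \<alpha>)}"
proof -
  assume a: "\<alpha> \<in> multi_idx n k"
  show ?thesis
  proof (intro set_eqI iffI)
    fix ts assume "ts \<in> fib n k \<alpha>"
    hence "cnt ts = cnt (wl n \<alpha>)" using cnt_wl[OF a] by (simp add: fib_def)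
    thus "ts \<in> {ts. mset ts = mset (wl n \<alpha>)}" by (simp add: cnt_def multiset_eq_iff fun_eq_iff)
  next
    fix ts assume "ts \<in> {ts. mset ts = mset (wl n \<alpha>)}"
    hence m: "mset ts = mset (wl n \<alpha>)" by simp
    have "cnt ts = \<alpha>" using cnt_wl[OF a] m by (simp add: cnt_def)
    moreover have "ts \<in> LS {0..n} k"
      using wl_LS[OF a] m mset_eq_length[OF m] mset_eq_setD[OF m] by (simp add: LS_def)
    ultimately show "ts \<in> fib n k \<alpha>" by (simp add: fib_def)
  qed
qed

lemma wl_fib: "\<alpha> \<in> multi_idx n k \<Longrightarrow> wl n \<alpha> \<in> fib n k \<alpha>"
  using fib_eq by auto

lemma finite_fib: "finite (fib n k \<alpha>)"
  unfolding fib_def using finite_LS[of "{0..n}" k] by simp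

lemma card_fib:
  assumes a: "\<alpha> \<in> multi_idx n k"
  shows "real (card (fib n k \<alpha>)) * (\<Prod>i\<in>{0..n}. fact (\<alpha> i)) = fact k"
proof -
  define A where "A = mset (wl n \<alpha>)"
  have fe: "fib n k \<alpha> = permutations_of_multiset A"
    using fib_eq[OF a] by (simp add: A_def permutations_of_multiset_def)
  have c: "card (permutations_of_multiset A) * (\<Prod>x\<in>set_mset A. fact (count A x)) = fact (size A)"
    by (rule card_permutations_of_multiset_aux)
  have sz: "size A = k" using wl_LS[OF a] by (simp add: A_def LS_def)
  have "(\<Prod>x\<in>set_mset A. fact (count A x) :: nat) = (\<Prod>x\<in>{0..n}. fact (count A x))"
  proof (rule prod.mono_neutral_left)
    show "finite {0..n}" by simp
    show "set_mset A \<subseteq> {0..n}" using set_wl by (simp add: A_def)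
    show "\<forall>i\<in>{0..n} - set_mset A. fact (count A i) = 1"
    proof
      fix i assume "i \<in> {0..n} - set_mset A"
      hence "count A i = 0" by (simp add: count_eq_zero_iff)
      thus "fact (count A i) = 1" by simp
    qed
  qed
  also have "\<dots> = (\<Prod>x\<in>{0..n}. fact (\<alpha> x))"
    by (intro prod.cong refl) (simp add: A_def count_wl)
  finally have P: "(\<Prod>x\<in>set_mset A. fact (count A x) :: nat) = (\<Prod>x\<in>{0..n}. fact (\<alpha> x))" .
  have N: "card (fib n k \<alpha>) * (\<Prod>x\<in>{0..n}. fact (\<alpha> x) :: nat) = fact k"
    using c unfolding fe P sz .
  have "real (card (fib n k \<alpha>) * (\<Prod>x\<in>{0..n}. fact (\<alpha> x) :: nat)) = real (fact k)"
    by (simp only: N)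
  thus ?thesis by (simp only: of_nat_mult of_nat_prod of_nat_fact)
qed

lemma card_fib_pos: "\<alpha> \<in> multi_idx n k \<Longrightarrow> card (fib n k \<alpha>) > 0"
proof -
  assume "\<alpha> \<in> multi_idx n k"
  hence "fib n k \<alpha> \<noteq> {}" using wl_fib by blast
  thus ?thesis using finite_fib by (simp add: card_gt_0_iff)
qed

definition avg :: "nat \<Rightarrow> nat \<Rightarrow> (nat list \<Rightarrow> real) \<Rightarrow> (nat \<Rightarrow> nat) \<Rightarrow> real" where
  "avg n k G \<alpha> = (\<Sum>ts\<in>fib n k \<alpha>. G ts) / real (card (fib n k \<alpha>))"



lemma bern_avg:
  "(\<Sum>ts\<in>LS {0..n} k. G ts * PL (bary n x) ts)
     = (\<Sum>\<alpha>\<in>multi_idx n k. avg n k G \<alpha> * bernstein n k \<alpha> x)"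
proof -
  have "(\<Sum>ts\<in>LS {0..n} k. G ts * PL (bary n x) ts)
     = (\<Sum>\<alpha>\<in>multi_idx n k. (\<Sum>ts\<in>fib n k \<alpha>. G ts) * (\<Prod>i\<in>{0..n}. bary n x i ^ \<alpha> i))"
    by (rule conv_sum)
  also have "\<dots> = (\<Sum>\<alpha>\<in>multi_idx n k. avg n k G \<alpha> * bernstein n k \<alpha> x)"
  proof (intro sum.cong refl)
    fix \<alpha> assume a: "\<alpha> \<in> multi_idx n k"
    have pf: "(\<Prod>i\<in>{0..n}. fact (\<alpha> i) :: real) \<noteq> 0" by (simp add: prod_zero_iff)
    have cp: "real (card (fib n k \<alpha>)) \<noteq> 0" using card_fib_pos[OF a] by simp
    have fk: "fact k / (\<Prod>i\<in>{0..n}. fact (\<alpha> i)) = real (card (fib n k \<alpha>))"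
    proof -
      have "fact k / (\<Prod>i\<in>{0..n}. fact (\<alpha> i)) = (real (card (fib n k \<alpha>)) * (\<Prod>i\<in>{0..n}. fact (\<alpha> i))) / (\<Prod>i\<in>{0..n}. fact (\<alpha> i))"
        by (simp only: card_fib[OF a])
      also have "\<dots> = real (card (fib n k \<alpha>))" using pf by (rule nonzero_mult_div_cancel_right)
      finally show ?thesis .
    qed
    have bern: "bernstein n k \<alpha> x = real (card (fib n k \<alpha>)) * (\<Prod>i\<in>{0..n}. bary n x i ^ \<alpha> i)"
      unfolding bernstein_def by (simp only: fk)
    have avgc: "avg n k G \<alpha> * real (card (fib n k \<alpha>)) = (\<Sum>ts\<in>fib n k \<alpha>. G ts)"
      unfolding avg_def using cp by simp
    have "avg n k G \<alpha> * bernstein n k \<alpha> x = avg n k G \<alpha> * (real (card (fib n k \<alpha>)) * (\<Prod>i\<in>{0..n}. bary n x i ^ \<alpha> i))"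
      by (simp only: bern)
    also have "\<dots> = (avg n k G \<alpha> * real (card (fib n k \<alpha>))) * (\<Prod>i\<in>{0..n}. bary n x i ^ \<alpha> i)"
      by (rule mult.assoc[symmetric])
    also have "\<dots> = (\<Sum>ts\<in>fib n k \<alpha>. G ts) * (\<Prod>i\<in>{0..n}. bary n x i ^ \<alpha> i)"
      by (simp only: avgc)
    finally show "(\<Sum>ts\<in>fib n k \<alpha>. G ts) * (\<Prod>i\<in>{0..n}. bary n x i ^ \<alpha> i) = avg n k G \<alpha> * bernstein n k \<alpha> x"
      by simp
  qed
  finally show ?thesis .
qed

lemma avg_sym: "\<alpha> \<in> multi_idx n k \<Longrightarrow> avg n k (\<lambda>ts. b (cnt ts)) \<alpha> = b \<alpha>"
proof -
  assume a: "\<alpha> \<in> multi_idx n k"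
  have "(\<Sum>ts\<in>fib n k \<alpha>. b (cnt ts)) = (\<Sum>ts\<in>fib n k \<alpha>. b \<alpha>)"
    by (intro sum.cong) (auto simp: fib_def)
  thus ?thesis unfolding avg_def using card_fib_pos[OF a] by simp
qed

lemma bern_sym:
  "(\<Sum>\<alpha>\<in>multi_idx n k. b \<alpha> * bernstein n k \<alpha> x) = (\<Sum>ts\<in>LS {0..n} k. b (cnt ts) * PL (bary n x) ts)"
proof -
  have "(\<Sum>ts\<in>LS {0..n} k. b (cnt ts) * PL (bary n x) ts)
      = (\<Sum>\<alpha>\<in>multi_idx n k. avg n k (\<lambda>ts. b (cnt ts)) \<alpha> * bernstein n k \<alpha> x)"
    by (rule bern_avg)
  also have "\<dots> = (\<Sum>\<alpha>\<in>multi_idx n k. b \<alpha> * bernstein n k \<alpha> x)"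
    by (intro sum.cong refl) (simp add: avg_sym)
  finally show ?thesis by simp
qed



lemma poly_zero:
  fixes e :: "(nat \<Rightarrow> nat) \<Rightarrow> real"
  assumes "finite A" "\<forall>\<alpha>\<in>A. \<forall>i\<ge>m. \<alpha> i = 0"
    and "\<forall>y. (\<Sum>\<alpha>\<in>A. e \<alpha> * (\<Prod>i<m. y i ^ \<alpha> i)) = 0"
  shows "\<forall>\<alpha>\<in>A. e \<alpha> = 0"
  using assms
proof (induction m arbitrary: A e)
  case 0
  show ?case
  proof
    fix \<alpha> assume a: "\<alpha> \<in> A"
    have z: "\<beta> = (\<lambda>_. 0)" if "\<beta> \<in> A" for \<beta> using 0(2) that by auto
    have "A = {\<alpha>}" using a z by blast
    thus "e \<alpha> = 0" using 0(3) by simp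
  qed
next
  case (Suc m)
  show ?case
  proof
    fix \<alpha>0 assume a0: "\<alpha>0 \<in> A"
    define j0 where "j0 = \<alpha>0 m"
    define N where "N = Max ((\<lambda>\<alpha>. \<alpha> m) ` A)"
    have j0N: "j0 \<le> N" unfolding N_def j0_def using a0 Suc.prems(1) by simp
    define C where "C j y = (\<Sum>\<alpha>\<in>{\<alpha>\<in>A. \<alpha> m = j}. e \<alpha> * (\<Prod>i<m. y i ^ \<alpha> i))" for j y
    have C0: "C j0 y = 0" for y
    proof -
      have "\<forall>t. (\<Sum>j\<le>N. C j y * t ^ j) = 0"
      proof
        fix t :: real
        have "(\<Sum>j\<le>N. C j y * t ^ j) = (\<Sum>j\<le>N. \<Sum>\<alpha>\<in>{\<alpha>\<in>A. \<alpha> m = j}. e \<alpha> * (\<Prod>i<m. y i ^ \<alpha> i) * t ^ (\<alpha> m))"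
          unfolding C_def by (intro sum.cong refl) (simp add: sum_distrib_right)
        also have "\<dots> = (\<Sum>\<alpha>\<in>A. e \<alpha> * (\<Prod>i<m. y i ^ \<alpha> i) * t ^ (\<alpha> m))"
          by (rule sum.group) (use Suc.prems(1) in \<open>auto simp: N_def\<close>)
        also have "\<dots> = (\<Sum>\<alpha>\<in>A. e \<alpha> * (\<Prod>i<Suc m. (y(m := t)) i ^ \<alpha> i))"
          by (intro sum.cong refl) (simp add: lessThan_Suc mult.commute)
        also have "\<dots> = 0" using Suc.prems(3) by blast
        finally show "(\<Sum>j\<le>N. C j y * t ^ j) = 0" .
      qed
      thus ?thesis using polyfun_eq_0[of C' N for C'] j0N by (simp add: polyfun_eq_0)
    qed
    define A' where "A' = (\<lambda>\<alpha>. \<alpha>(m := 0)) ` {\<alpha>\<in>A. \<alpha> m = j0}"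
    define e' where "e' \<beta> = e (\<beta>(m := j0))" for \<beta>
    have inj: "inj_on (\<lambda>\<alpha>. \<alpha>(m := 0)) {\<alpha>\<in>A. \<alpha> m = j0}"
    proof (rule inj_onI)
      fix a b assume "a \<in> {\<alpha>\<in>A. \<alpha> m = j0}" "b \<in> {\<alpha>\<in>A. \<alpha> m = j0}" "a(m := 0) = b(m := 0)"
      thus "a = b" by (metis (mono_tags, lifting) fun_upd_triv fun_upd_upd mem_Collect_eq)
    qed
    have "\<forall>\<beta>\<in>A'. e' \<beta> = 0"
    proof (rule Suc.IH)
      show "finite A'" unfolding A'_def using Suc.prems(1) by simp
      show "\<forall>\<beta>\<in>A'. \<forall>i\<ge>m. \<beta> i = 0" unfolding A'_def using Suc.prems(2) by auto
      show "\<forall>y. (\<Sum>\<beta>\<in>A'. e' \<beta> * (\<Prod>i<m. y i ^ \<beta> i)) = 0"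
      proof
        fix y
        have "(\<Sum>\<beta>\<in>A'. e' \<beta> * (\<Prod>i<m. y i ^ \<beta> i))
            = (\<Sum>\<alpha>\<in>{\<alpha>\<in>A. \<alpha> m = j0}. e' (\<alpha>(m := 0)) * (\<Prod>i<m. y i ^ (\<alpha>(m := 0)) i))"
          unfolding A'_def by (rule sum.reindex[OF inj, unfolded comp_def])
        also have "\<dots> = C j0 y"
          unfolding C_def e'_def by (intro sum.cong refl) (auto intro!: prod.cong)
        finally show "(\<Sum>\<beta>\<in>A'. e' \<beta> * (\<Prod>i<m. y i ^ \<beta> i)) = 0" using C0 by simp
      qed
    qed
    moreover have "\<alpha>0(m := 0) \<in> A'" unfolding A'_def j0_def using a0 by auto
    ultimately have "e' (\<alpha>0(m := 0)) = 0" by blast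
    thus "e \<alpha>0 = 0" unfolding e'_def j0_def by simp
  qed
qed



lemma sum_0n: "(\<Sum>i\<in>{0..(n::nat)}. f i) = f 0 + (\<Sum>i\<in>{1..n}. (f i :: real))"
  using sum.atLeast_Suc_atMost[of 0 n f] by simp

lemma bary_sum: "(\<Sum>i\<in>{0..n}. bary n x i) = 1"
proof -
  have "(\<Sum>i\<in>{1..n}. bary n x i) = (\<Sum>i\<in>{1..n}. x i)"
    by (intro sum.cong) (auto simp: bary_def)
  thus ?thesis by (simp add: sum_0n bary_def)
qed

lemma bern_unique:
  assumes "\<forall>x. (\<Sum>\<alpha>\<in>multi_idx n k. d \<alpha> * bernstein n k \<alpha> x) = 0"
  shows "\<forall>\<alpha>\<in>multi_idx n k. d \<alpha> = 0"
proof -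
  define e where "e \<alpha> = d \<alpha> * (fact k / (\<Prod>i\<in>{0..n}. fact (\<alpha> i)))" for \<alpha>
  define F where "F y = (\<Sum>\<alpha>\<in>multi_idx n k. e \<alpha> * (\<Prod>i\<in>{0..n}. (y i :: real) ^ \<alpha> i))" for y
  have Fb: "F (bary n x) = 0" for x
  proof -
    have "F (bary n x) = (\<Sum>\<alpha>\<in>multi_idx n k. d \<alpha> * bernstein n k \<alpha> x)"
      unfolding F_def e_def bernstein_def by (intro sum.cong refl) (simp add: mult.assoc)
    thus ?thesis using assms by simp
  qed
  have F1: "F y = 0" if S: "(\<Sum>i\<in>{0..n}. y i) \<noteq> 0" for y
  proof -
    define s where "s = (\<Sum>i\<in>{0..n}. y i)"
    have s0: "s \<noteq> 0" using S s_def by simp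
    define x where "x i = y i / s" for i
    have bx: "bary n x i = y i / s" if "i \<in> {0..n}" for i
    proof (cases "i = 0")
      case True
      have "s = y 0 + (\<Sum>j\<in>{1..n}. y j)" unfolding s_def by (rule sum_0n)
      hence "1 - (\<Sum>j\<in>{1..n}. y j / s) = y 0 / s" using s0
        by (simp add: sum_divide_distrib[symmetric] field_simps)
      thus ?thesis using True by (simp add: bary_def x_def)
    next
      case False thus ?thesis by (simp add: bary_def x_def)
    qed
    have "0 = F (bary n x)" using Fb by simp
    also have "\<dots> = (\<Sum>\<alpha>\<in>multi_idx n k. e \<alpha> * (\<Prod>i\<in>{0..n}. (y i / s) ^ \<alpha> i))"
      unfolding F_def by (intro sum.cong refl) (simp add: bx)
    also have "\<dots> = (\<Sum>\<alpha>\<in>multi_idx n k. e \<alpha> * (\<Prod>i\<in>{0..n}. y i ^ \<alpha> i)) / s ^ k"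
    proof -
      have "(\<Prod>i\<in>{0..n}. (y i / s) ^ \<alpha> i) = (\<Prod>i\<in>{0..n}. y i ^ \<alpha> i) / s ^ k"
        if "\<alpha> \<in> multi_idx n k" for \<alpha>
      proof -
        have "(\<Prod>i\<in>{0..n}. (y i / s) ^ \<alpha> i) = (\<Prod>i\<in>{0..n}. y i ^ \<alpha> i) / (\<Prod>i\<in>{0..n}. s ^ \<alpha> i)"
          by (simp add: power_divide prod_dividef)
        also have "(\<Prod>i\<in>{0..n}. s ^ \<alpha> i) = s ^ k"
          using that by (simp add: power_sum[symmetric] multi_idx_def)
        finally show ?thesis .
      qed
      thus ?thesis by (simp add: sum_divide_distrib)
    qed
    finally show ?thesis unfolding F_def using s0 by simp
  qed
  have F2: "F y = 0" for y
  proof (cases "(\<Sum>i\<in>{0..n}. y i) = 0")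
    case False thus ?thesis using F1 by blast
  next
    case True
    define g where "g t = (\<Sum>\<alpha>\<in>multi_idx n k. e \<alpha> * (\<Prod>i\<in>{0..n}. (y i + of_bool (i = 0) * t) ^ \<alpha> i))" for t
    have gF: "g t = F (\<lambda>i. y i + of_bool (i = 0) * t)" for t unfolding g_def F_def by simp
    have gz: "g t = 0" if "t \<noteq> 0" for t
    proof -
      have "(\<Sum>i\<in>{0..n}. y i + of_bool (i = 0) * t) = (\<Sum>i\<in>{0..n}. y i) + (\<Sum>i\<in>{0..n}. of_bool (i = 0) * t)"
        by (rule sum.distrib)
      also have "(\<Sum>i\<in>{0..n}. of_bool (i = 0) * t) = t"
      proof -
        have "(\<Sum>i\<in>{0..n}. of_bool (i = 0) * t) = (\<Sum>i\<in>{0..n}. if i = 0 then t else 0)"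
          by (intro sum.cong refl) simp
        thus ?thesis by simp
      qed
      finally have "(\<Sum>i\<in>{0..n}. y i + of_bool (i = 0) * t) \<noteq> 0" using True that by simp
      thus ?thesis using F1 gF by simp
    qed
    have "isCont g 0" unfolding g_def by (intro continuous_intros)
    hence l1: "g \<midarrow>0\<rightarrow> g 0" by (simp add: isCont_def)
    have "\<forall>\<^sub>F t in at 0. g t = 0" by (auto simp: eventually_at_filter gz)
    hence l2: "g \<midarrow>0\<rightarrow> 0" by (simp add: tendsto_eventually)
    have "g 0 = 0" using LIM_unique[OF l1 l2] .
    thus ?thesis using gF[of 0] by simp
  qed
  have "\<forall>\<alpha>\<in>multi_idx n k. e \<alpha> = 0"
  proof (rule poly_zero[where m = "Suc n"])
    show "finite (multi_idx n k)" by (rule finite_multi_idx)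
    show "\<forall>\<alpha>\<in>multi_idx n k. \<forall>i\<ge>Suc n. \<alpha> i = 0" by (auto simp: multi_idx_def)
    show "\<forall>y. (\<Sum>\<alpha>\<in>multi_idx n k. e \<alpha> * (\<Prod>i<Suc n. y i ^ \<alpha> i)) = 0"
      using F2 unfolding F_def by (simp add: atLeast0AtMost lessThan_Suc_atMost)
  qed
  moreover have "(fact k / (\<Prod>i\<in>{0..n}. fact (\<alpha> i)) :: real) \<noteq> 0" for \<alpha>
    by (simp add: prod_zero_iff)
  ultimately show ?thesis unfolding e_def by simp
qed

lemma bern_coeff_eqI:
  assumes "\<forall>\<alpha>. \<alpha> \<notin> multi_idx n k \<longrightarrow> b \<alpha> = 0"
    and "\<forall>x. peval n c x = (\<Sum>\<alpha>\<in>multi_idx n k. b \<alpha> * bernstein n k \<alpha> x)"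
  shows "bern_coeff n c k = b"
  unfolding bern_coeff_def
proof (rule the_equality)
  show "(\<forall>\<alpha>. \<alpha> \<notin> multi_idx n k \<longrightarrow> b \<alpha> = 0) \<and>
    (\<forall>x. peval n c x = (\<Sum>\<alpha>\<in>multi_idx n k. b \<alpha> * bernstein n k \<alpha> x))" using assms by blast
next
  fix b2 assume b2: "(\<forall>\<alpha>. \<alpha> \<notin> multi_idx n k \<longrightarrow> b2 \<alpha> = 0) \<and>
    (\<forall>x. peval n c x = (\<Sum>\<alpha>\<in>multi_idx n k. b2 \<alpha> * bernstein n k \<alpha> x))"
  have "\<forall>x. (\<Sum>\<alpha>\<in>multi_idx n k. (b2 \<alpha> - b \<alpha>) * bernstein n k \<alpha> x) = 0"
  proof
    fix x
    have "(\<Sum>\<alpha>\<in>multi_idx n k. (b2 \<alpha> - b \<alpha>) * bernstein n k \<alpha> x)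
        = (\<Sum>\<alpha>\<in>multi_idx n k. b2 \<alpha> * bernstein n k \<alpha> x) - (\<Sum>\<alpha>\<in>multi_idx n k. b \<alpha> * bernstein n k \<alpha> x)"
      by (simp add: left_diff_distrib sum_subtractf)
    thus "(\<Sum>\<alpha>\<in>multi_idx n k. (b2 \<alpha> - b \<alpha>) * bernstein n k \<alpha> x) = 0" using b2 assms(2) by simp
  qed
  hence "\<forall>\<alpha>\<in>multi_idx n k. b2 \<alpha> - b \<alpha> = 0" by (rule bern_unique)
  thus "b2 = b" using b2 assms(1) by (metis eq_iff_diff_eq_0 ext)
qed



lemma finite_monomial_exps: "finite (monomial_exps n l)"
proof -
  have "monomial_exps n l \<subseteq> (\<lambda>\<alpha>. \<alpha>(0 := 0)) ` multi_idx n l"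
  proof
    fix \<beta> assume b: "\<beta> \<in> monomial_exps n l"
    define s where "s = (\<Sum>i\<in>{1..n}. \<beta> i)"
    have sl: "s \<le> l" using b by (simp add: monomial_exps_def s_def)
    define \<alpha> where "\<alpha> = \<beta>(0 := l - s)"
    have "(\<Sum>i\<in>{0..n}. \<alpha> i) = \<alpha> 0 + (\<Sum>i\<in>{1..n}. \<alpha> i)"
      using sum.atLeast_Suc_atMost[of 0 n \<alpha>] by simp
    also have "(\<Sum>i\<in>{1..n}. \<alpha> i) = s" unfolding s_def \<alpha>_def by (intro sum.cong) auto
    finally have "(\<Sum>i\<in>{0..n}. \<alpha> i) = l" using sl by (simp add: \<alpha>_def)
    moreover have "\<forall>i>n. \<alpha> i = 0" using b by (simp add: \<alpha>_def monomial_exps_def)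
    ultimately have "\<alpha> \<in> multi_idx n l" by (simp add: multi_idx_def)
    moreover have "\<beta> = \<alpha>(0 := 0)" using b by (auto simp: \<alpha>_def monomial_exps_def)
    ultimately show "\<beta> \<in> (\<lambda>\<alpha>. \<alpha>(0 := 0)) ` multi_idx n l" by blast
  qed
  thus ?thesis using finite_multi_idx finite_subset by blast
qed

lemma monomial_seq:
  assumes b: "\<beta> \<in> monomial_exps n l"
  shows "(\<Prod>i\<in>{1..n}. x i ^ \<beta> i)
       = (\<Sum>ts\<in>LS {0..n} l. of_bool (take (\<Sum>i\<in>{1..n}. \<beta> i) ts = wl n \<beta>) * PL (bary n x) ts)"
proof -
  define s where "s = (\<Sum>i\<in>{1..n}. \<beta> i)"
  have sl: "s \<le> l" using b by (simp add: monomial_exps_def s_def)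
  have b0: "\<beta> 0 = 0" and bn: "\<forall>i>n. \<beta> i = 0" using b by (auto simp: monomial_exps_def)
  have lw: "length (wl n \<beta>) = s"
    using length_wl[of n \<beta>] sum.atLeast_Suc_atMost[of 0 n \<beta>] b0 by (simp add: s_def)
  have wLS: "wl n \<beta> \<in> LS {0..n} s" using lw set_wl by (simp add: LS_def)
  have "PL (bary n x) (wl n \<beta>) = (\<Prod>i\<in>{0..n}. bary n x i ^ cnt (wl n \<beta>) i)"
    by (rule PL_count[OF set_wl])
  also have "\<dots> = (\<Prod>i\<in>{0..n}. bary n x i ^ \<beta> i)"
    by (intro prod.cong refl) (simp add: cnt_def count_wl)
  also have "\<dots> = bary n x 0 ^ \<beta> 0 * (\<Prod>i\<in>{1..n}. bary n x i ^ \<beta> i)"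
    using prod.atLeast_Suc_atMost[of 0 n "\<lambda>i. bary n x i ^ \<beta> i"] by simp
  also have "\<dots> = (\<Prod>i\<in>{1..n}. x i ^ \<beta> i)"
    using b0 by (simp add: bary_def)
  finally have m: "(\<Prod>i\<in>{1..n}. x i ^ \<beta> i) = PL (bary n x) (wl n \<beta>)" by simp
  have "(\<Sum>ts\<in>LS {0..n} l. of_bool (take s ts = wl n \<beta>) * PL (bary n x) ts)
      = (\<Sum>us\<in>LS {0..n} s. of_bool (us = wl n \<beta>) * PL (bary n x) us) * (\<Sum>vs\<in>LS {0..n} (l - s). PL (bary n x) vs)"
    by (rule sum_take_split[OF _ sl]) simp
  also have "(\<Sum>vs\<in>LS {0..n} (l - s). PL (bary n x) vs) = 1"
    by (simp add: sum_PL_LS bary_sum)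
  also have "(\<Sum>us\<in>LS {0..n} s. of_bool (us = wl n \<beta>) * PL (bary n x) us) = PL (bary n x) (wl n \<beta>)"
  proof -
    have "(\<Sum>us\<in>LS {0..n} s. of_bool (us = wl n \<beta>) * PL (bary n x) us)
        = (\<Sum>us\<in>LS {0..n} s. if us = wl n \<beta> then PL (bary n x) us else 0)"
      by (intro sum.cong refl) simp
    also have "\<dots> = PL (bary n x) (wl n \<beta>)" using wLS finite_LS[of "{0..n}" s] by (simp add: sum.delta')
    finally show ?thesis .
  qed
  finally show ?thesis using m by (simp add: s_def)
qed

lemma exists_seq_form:
  assumes "is_poly n l c"
  shows "\<exists>G. \<forall>x. peval n c x = (\<Sum>ts\<in>LS {0..n} l. G ts * PL (bary n x) ts)"
proof -
  define B where "B = {\<beta>. c \<beta> \<noteq> 0}"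
  have BM: "B \<subseteq> monomial_exps n l" using assms by (auto simp: is_poly_def B_def)
  have fB: "finite B" using BM finite_monomial_exps finite_subset by blast
  define G where "G ts = (\<Sum>\<beta>\<in>B. c \<beta> * of_bool (take (\<Sum>i\<in>{1..n}. \<beta> i) ts = wl n \<beta>))" for ts
  have "peval n c x = (\<Sum>ts\<in>LS {0..n} l. G ts * PL (bary n x) ts)" for x
  proof -
    have "peval n c x = (\<Sum>\<beta>\<in>B. c \<beta> * (\<Sum>ts\<in>LS {0..n} l. of_bool (take (\<Sum>i\<in>{1..n}. \<beta> i) ts = wl n \<beta>) * PL (bary n x) ts))"
      unfolding peval_def B_def[symmetric]
      by (intro sum.cong refl) (use BM monomial_seq in auto)
    also have "\<dots> = (\<Sum>ts\<in>LS {0..n} l. G ts * PL (bary n x) ts)"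
      unfolding G_def by (simp add: sum_distrib_left sum_distrib_right mult.assoc sum.swap[of _ B])
    finally show ?thesis .
  qed
  thus ?thesis by blast
qed

lemma bern_coeff_prop:
  assumes "is_poly n l c"
  shows "\<forall>x. peval n c x = (\<Sum>\<alpha>\<in>multi_idx n l. bern_coeff n c l \<alpha> * bernstein n l \<alpha> x)"
proof -
  obtain G where G: "\<forall>x. peval n c x = (\<Sum>ts\<in>LS {0..n} l. G ts * PL (bary n x) ts)"
    using exists_seq_form[OF assms] by blast
  define b where "b \<alpha> = (if \<alpha> \<in> multi_idx n l then avg n l G \<alpha> else 0)" for \<alpha>
  have bp: "\<forall>x. peval n c x = (\<Sum>\<alpha>\<in>multi_idx n l. b \<alpha> * bernstein n l \<alpha> x)"
    using G by (simp add: bern_avg b_def)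
  have "bern_coeff n c l = b"
    by (rule bern_coeff_eqI) (use bp in \<open>auto simp: b_def\<close>)
  thus ?thesis using bp by simp
qed



lemma count_card: "count (mset ts) u = card {i. i < length ts \<and> ts ! i = u}"
proof -
  have "count (mset ts) u = length (filter (\<lambda>x. x = u) ts)" by (induction ts) auto
  thus ?thesis by (simp add: length_filter_conv_card)
qed

lemma sum_map_group:
  fixes F :: "nat list \<Rightarrow> real" and A :: "nat set"
  assumes fA: "finite A" and fB: "finite B" and gAB: "g ` A \<subseteq> B"
  shows "(\<Sum>s\<in>LS A m. F (map g s)) = (\<Sum>us\<in>LS B m. F us * PL (\<lambda>u. real (card {a\<in>A. g a = u})) us)"
proof (induction m arbitrary: F)
  case 0 thus ?case by (simp add: LS_0 PL_def)
next
  case (Suc m)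
  let ?c = "\<lambda>u. real (card {a\<in>A. g a = u})"
  have grp: "(\<Sum>a\<in>A. h (g a)) = (\<Sum>u\<in>B. ?c u * h u)" for h :: "nat \<Rightarrow> real"
  proof -
    have "(\<Sum>a\<in>A. h (g a)) = (\<Sum>u\<in>B. \<Sum>a\<in>{a\<in>A. g a = u}. h (g a))"
      by (rule sum.group[symmetric, OF fA fB gAB])
    also have "\<dots> = (\<Sum>u\<in>B. \<Sum>a\<in>{a\<in>A. g a = u}. h u)" by (intro sum.cong refl) auto
    also have "\<dots> = (\<Sum>u\<in>B. ?c u * h u)" by simp
    finally show ?thesis .
  qed
  have "(\<Sum>s\<in>LS A (Suc m). F (map g s)) = (\<Sum>a\<in>A. \<Sum>s\<in>LS A m. F (g a # map g s))"
    by (simp add: sum_LS_Suc[OF fA])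
  also have "\<dots> = (\<Sum>a\<in>A. \<Sum>us\<in>LS B m. F (g a # us) * PL ?c us)"
  proof (rule sum.cong[OF refl])
    fix a assume "a \<in> A"
    show "(\<Sum>s\<in>LS A m. F (g a # map g s)) = (\<Sum>us\<in>LS B m. F (g a # us) * PL ?c us)"
      by (rule Suc.IH)
  qed
  also have "\<dots> = (\<Sum>us\<in>LS B m. \<Sum>a\<in>A. F (g a # us) * PL ?c us)" by (rule sum.swap)
  also have "\<dots> = (\<Sum>us\<in>LS B m. \<Sum>u\<in>B. ?c u * (F (u # us) * PL ?c us))"
  proof (rule sum.cong[OF refl])
    fix us
    show "(\<Sum>a\<in>A. F (g a # us) * PL ?c us) = (\<Sum>u\<in>B. ?c u * (F (u # us) * PL ?c us))"
      using grp[of "\<lambda>u. F (u # us) * PL ?c us"] by simp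
  qed
  also have "\<dots> = (\<Sum>u\<in>B. \<Sum>us\<in>LS B m. F (u # us) * PL ?c (u # us))"
    by (subst sum.swap) (simp add: PL_def mult_ac)
  also have "\<dots> = (\<Sum>vs\<in>LS B (Suc m). F vs * PL ?c vs)"
    by (simp add: sum_LS_Suc[OF fB])
  finally show ?case .
qed

definition Inj :: "nat \<Rightarrow> nat \<Rightarrow> nat list set" where
  "Inj k l = {s. length s = l \<and> distinct s \<and> set s \<subseteq> {..<k}}"

lemma Inj_sub: "Inj k l \<subseteq> LS {..<k} l" unfolding Inj_def LS_def by auto

lemma finite_Inj: "finite (Inj k l)" using Inj_sub finite_LS[of "{..<k}" l] finite_subset by blast

lemma card_Inj: "l \<le> k \<Longrightarrow> card (Inj k l) = \<Prod>{k - l + 1..k}"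
  unfolding Inj_def using card_lists_distinct_length_eq[of "{..<k}" l] by simp

lemma Inj_ne: "l \<le> k \<Longrightarrow> [0..<l] \<in> Inj k l" unfolding Inj_def by auto

lemma card_Inj_pos: "l \<le> k \<Longrightarrow> card (Inj k l) > 0"
  using Inj_ne finite_Inj card_gt_0_iff by blast

lemma elev_identity:
  fixes H :: "nat list \<Rightarrow> real"
  assumes lk: "l \<le> k"
  shows "(\<Sum>ts\<in>LS {0..n} k. ((\<Sum>s\<in>Inj k l. H (map (nth ts) s)) / real (card (Inj k l))) * PL (bary n x) ts)
       = (\<Sum>us\<in>LS {0..n} l. H us * PL (bary n x) us)"
proof -
  let ?N = "real (card (Inj k l))"
  have N0: "?N \<noteq> 0" using card_Inj_pos[OF lk] by simp
  have "(\<Sum>ts\<in>LS {0..n} k. ((\<Sum>s\<in>Inj k l. H (map (nth ts) s)) / ?N) * PL (bary n x) ts)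
      = (\<Sum>s\<in>Inj k l. \<Sum>ts\<in>LS {0..n} k. H (map (nth ts) s) * PL (bary n x) ts) / ?N"
    by (simp add: sum_divide_distrib sum_distrib_right sum.swap[of _ "Inj k l"])
  also have "\<dots> = (\<Sum>s\<in>Inj k l. \<Sum>ts\<in>LS {0..n} k. H (take l ts) * PL (bary n x) ts) / ?N"
    by (intro arg_cong2[where f="(/)"] sum.cong refl sum_sub_perm) (auto simp: Inj_def)
  also have "\<dots> = (\<Sum>s\<in>Inj k l. \<Sum>us\<in>LS {0..n} l. H us * PL (bary n x) us) / ?N"
  proof -
    have "(\<Sum>ts\<in>LS {0..n} k. H (take l ts) * PL (bary n x) ts) = (\<Sum>us\<in>LS {0..n} l. H us * PL (bary n x) us)"
      using sum_take_split[of "{0..n}" l k H "bary n x"] lk by (simp add: sum_PL_LS bary_sum)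
    thus ?thesis by simp
  qed
  also have "\<dots> = (\<Sum>us\<in>LS {0..n} l. H us * PL (bary n x) us)" using N0 by simp
  finally show ?thesis .
qed

lemma weierstrass_count:
  assumes "l \<le> k"
  shows "real k ^ l - real (l * (l - 1)) / 2 * real k ^ (l - 1) \<le> real (\<Prod>{k - l + 1..k})"
  using assms
proof (induction l)
  case 0 thus ?case by simp
next
  case (Suc l)
  define P where "P = real (\<Prod>{k - l + 1..k})"
  have IH: "real k ^ l - real (l * (l - 1)) / 2 * real k ^ (l - 1) \<le> P"
    using Suc by (simp add: P_def)
  have "\<Prod>{k - Suc l + 1..k} = (k - l) * \<Prod>{k - l + 1..k}"
  proof -
    have "k - Suc l + 1 = k - l" using Suc.prems by simp
    moreover have "\<Prod>{k - l..k} = (k - l) * \<Prod>{Suc (k - l)..k}"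
      by (rule prod.atLeast_Suc_atMost) simp
    ultimately show ?thesis by simp
  qed
  hence eq: "real (\<Prod>{k - Suc l + 1..k}) = (real k - real l) * P"
    using Suc.prems by (simp add: P_def of_nat_diff)
  have kl: "real k - real l \<ge> 0" using Suc.prems by simp
  define T where "T = real (l * (l - 1)) / 2 * real k ^ (l - 1)"
  have T0: "T \<ge> 0" unfolding T_def by simp
  have kT: "real k * T = real (l * (l - 1)) / 2 * real k ^ l"
    unfolding T_def by (cases l) auto
  have "(real k - real l) * (real k ^ l - T) \<le> (real k - real l) * P"
    using IH kl by (simp add: T_def mult_left_mono)
  moreover have "(real k - real l) * (real k ^ l - T)
      = real k ^ Suc l - real l * real k ^ l - real k * T + real l * T"
    by (simp add: algebra_simps)
  moreover have "real (Suc l * (Suc l - 1)) / 2 * real k ^ (Suc l - 1)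
      = real l * real k ^ l + real (l * (l - 1)) / 2 * real k ^ l"
  proof -
    have h: "real (Suc l * (Suc l - 1)) = 2 * real l + real (l * (l - 1))" by (cases l) (auto simp: algebra_simps)
    show ?thesis unfolding h by (simp add: add_divide_distrib distrib_right)
  qed
  moreover have "real l * T \<ge> 0" using T0 by simp
  ultimately show ?case using eq kT by linarith
qed



lemma compact_simplex: "compact (simplex n)"
proof -
  define K where "K i = (if i \<in> {1..n} then {0..1} else {0::real})" for i :: nat
  have cK: "compact (Pi\<^sub>E UNIV K)"
  proof -
    have "compactin (product_topology (\<lambda>i. euclidean) UNIV) (Pi\<^sub>E UNIV K)"
      unfolding compactin_PiE by (auto simp: K_def)
    thus ?thesis by (simp add: euclidean_product_topology)
  qed
  have cont: "continuous_on UNIV (\<lambda>x::nat\<Rightarrow>real. \<Sum>i\<in>{1..n}. x i)"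
    by (intro continuous_on_sum) simp
  have cl: "closed {x::nat\<Rightarrow>real. (\<Sum>i\<in>{1..n}. x i) \<le> 1}"
    by (rule closed_Collect_le[OF cont continuous_on_const])
  have "simplex n = Pi\<^sub>E UNIV K \<inter> {x. (\<Sum>i\<in>{1..n}. x i) \<le> 1}"
  proof (intro set_eqI iffI)
    fix x assume x: "x \<in> simplex n"
    have "x i \<in> K i" for i
    proof (cases "i \<in> {1..n}")
      case True
      have "x i \<le> (\<Sum>j\<in>{1..n}. x j)"
        by (rule member_le_sum[OF True]) (use x in \<open>auto simp: simplex_def\<close>)
      thus ?thesis using True x by (auto simp: simplex_def K_def)
    next
      case False
      hence "i = 0 \<or> n < i" by auto
      thus ?thesis using False x by (auto simp: simplex_def K_def)
    qed
    thus "x \<in> Pi\<^sub>E UNIV K \<inter> {x. (\<Sum>i\<in>{1..n}. x i) \<le> 1}" using x by (auto simp: simplex_def)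
  next
    fix x assume "x \<in> Pi\<^sub>E UNIV K \<inter> {x. (\<Sum>i\<in>{1..n}. x i) \<le> 1}"
    hence x: "\<And>i. x i \<in> K i" "(\<Sum>i\<in>{1..n}. x i) \<le> 1" by auto
    show "x \<in> simplex n" unfolding simplex_def
    proof (intro CollectI conjI allI impI ballI)
      fix i :: nat assume "i = 0 \<or> n < i"
      thus "x i = 0" using x(1)[of i] by (auto simp: K_def split: if_splits)
    next
      fix i assume "i \<in> {1..n}"
      thus "0 \<le> x i" using x(1)[of i] by (auto simp: K_def)
    qed (rule x(2))
  qed
  thus ?thesis using compact_Int_closed[OF cK cl] by simp
qed

lemma peval_cont:
  assumes "is_poly n l c"
  shows "continuous_on S (peval n c)"
proof -
  have coord: "continuous_on S (\<lambda>x::nat\<Rightarrow>real. x i)" for i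
    by (rule continuous_on_subset[OF continuous_on_product_coordinates]) simp
  show ?thesis unfolding peval_def
    by (intro continuous_on_sum continuous_on_mult continuous_on_const continuous_on_prod
          continuous_on_power coord)
qed

lemma simplex_min:
  assumes "is_poly n l c"
  obtains x0 where "x0 \<in> simplex n" "\<forall>x\<in>simplex n. peval n c x0 \<le> peval n c x"
    "(INF x\<in>simplex n. peval n c x) = peval n c x0"
proof -
  have ne: "simplex n \<noteq> {}"
  proof -
    have "(\<lambda>_. 0) \<in> simplex n" by (simp add: simplex_def)
    thus ?thesis by blast
  qed
  obtain x0 where x0: "x0 \<in> simplex n" "\<forall>x\<in>simplex n. peval n c x0 \<le> peval n c x"
    using continuous_attains_inf[OF compact_simplex ne peval_cont[OF assms]] by blast
  have "(INF x\<in>simplex n. peval n c x) = peval n c x0"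
  proof (rule antisym)
    show "(INF x\<in>simplex n. peval n c x) \<le> peval n c x0"
      by (rule cINF_lower[OF _ x0(1)]) (use x0 in \<open>auto simp: bdd_below_def\<close>)
    show "peval n c x0 \<le> (INF x\<in>simplex n. peval n c x)"
      by (rule cINF_greatest[OF ne]) (use x0 in auto)
  qed
  thus ?thesis using that x0 by blast
qed



lemma PL_nonneg: "(\<forall>u\<in>set us. 0 \<le> y u) \<Longrightarrow> 0 \<le> PL y us"
  unfolding PL_def by (induction us) auto

lemma PL_scale: "PL (\<lambda>u. c * f u) us = c ^ length us * PL f us"
  unfolding PL_def by (induction us) auto

lemma bary_nonneg: "x \<in> simplex n \<Longrightarrow> i \<le> n \<Longrightarrow> 0 \<le> bary n x i"
  unfolding simplex_def bary_def by auto

lemma unit_mult_idx: "i \<le> n \<Longrightarrow> unit_mult k i \<in> multi_idx n k"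
  unfolding multi_idx_def unit_mult_def by (auto simp: sum.delta)

lemma inj_sum_pos:
  fixes b :: "(nat \<Rightarrow> nat) \<Rightarrow> real"
  assumes ts: "ts \<in> LS {0..n} k" and lk: "l \<le> k" and k0: "0 < k"
    and pm0: "0 < pm"
    and pmle: "\<forall>x\<in>simplex n. pm \<le> (\<Sum>us\<in>LS {0..n} l. b (cnt us) * PL (bary n x) us)"
    and bM: "\<forall>\<alpha>\<in>multi_idx n l. \<bar>b \<alpha>\<bar> \<le> M"
    and key: "real (l * (l - 1)) / 2 * M < real k * pm"
  shows "0 < (\<Sum>s\<in>Inj k l. b (cnt (map (nth ts) s)))"
proof -
  let ?H = "\<lambda>us. b (cnt us)"
  let ?All = "LS {..<k} l"
  have lt: "length ts = k" and st: "set ts \<subseteq> {0..n}" using ts by (auto simp: LS_def)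
  define xt where "xt i = (if i \<in> {1..n} then real (cnt ts i) / real k else 0)" for i
  have sc: "real k = real (cnt ts 0) + (\<Sum>i\<in>{1..n}. real (cnt ts i))"
  proof -
    have "real k = real (\<Sum>i\<in>{0..n}. cnt ts i)" using sum_cnt[OF st] lt by simp
    also have "\<dots> = (\<Sum>i\<in>{0..n}. real (cnt ts i))" by simp
    also have "\<dots> = real (cnt ts 0) + (\<Sum>i\<in>{1..n}. real (cnt ts i))" by (rule sum_0n)
    finally show ?thesis .
  qed
  have bxt: "bary n xt u = real (cnt ts u) / real k" if "u \<in> {0..n}" for u
  proof (cases "u = 0")
    case True
    have "(\<Sum>j\<in>{1..n}. xt j) = (\<Sum>j\<in>{1..n}. real (cnt ts j)) / real k"
      unfolding xt_def by (simp add: sum_divide_distrib)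
    hence "1 - (\<Sum>j\<in>{1..n}. xt j) = real (cnt ts 0) / real k"
      using k0 sc by (simp add: field_simps)
    thus ?thesis using True by (simp add: bary_def)
  next
    case False thus ?thesis using that by (simp add: bary_def xt_def)
  qed
  have xts: "xt \<in> simplex n"
  proof -
    have "(\<Sum>j\<in>{1..n}. xt j) = (\<Sum>j\<in>{1..n}. real (cnt ts j)) / real k"
      unfolding xt_def by (simp add: sum_divide_distrib)
    also have "\<dots> \<le> 1" using sc k0 by (simp add: divide_le_eq)
    finally show ?thesis unfolding simplex_def by (auto simp: xt_def)
  qed
  have cardeq: "card {a \<in> {..<k}. ts ! a = u} = cnt ts u" for u
    unfolding cnt_def count_card lt[symmetric] by (rule arg_cong[where f=card]) auto
  have "(\<Sum>s\<in>?All. ?H (map (nth ts) s)) = (\<Sum>us\<in>LS {0..n} l. ?H us * PL (\<lambda>u. real (card {a\<in>{..<k}. ts ! a = u})) us)"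
    by (rule sum_map_group) (use st lt in auto)
  also have "\<dots> = (\<Sum>us\<in>LS {0..n} l. ?H us * (real k ^ l * PL (bary n xt) us))"
  proof (intro sum.cong refl)
    fix us assume us: "us \<in> LS {0..n} l"
    have "PL (\<lambda>u. real (card {a\<in>{..<k}. ts ! a = u})) us = PL (\<lambda>u. real k * (real (cnt ts u) / real k)) us"
    proof -
      have "(\<lambda>u. real (card {a\<in>{..<k}. ts ! a = u})) = (\<lambda>u. real k * (real (cnt ts u) / real k))"
      proof (rule ext)
        fix u show "real (card {a\<in>{..<k}. ts ! a = u}) = real k * (real (cnt ts u) / real k)"
          unfolding cardeq using k0 by simp
      qed
      thus ?thesis by (simp only:)
    qed
    also have "\<dots> = real k ^ l * PL (\<lambda>u. real (cnt ts u) / real k) us"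
      using us PL_scale[of "real k" "\<lambda>u. real (cnt ts u) / real k" us] by (simp only: LS_def mem_Collect_eq)
    also have "PL (\<lambda>u. real (cnt ts u) / real k) us = PL (bary n xt) us"
      unfolding PL_def using us bxt by (intro arg_cong[where f=prod_list] map_cong) (auto simp: LS_def)
    finally show "?H us * PL (\<lambda>u. real (card {a\<in>{..<k}. ts ! a = u})) us = ?H us * (real k ^ l * PL (bary n xt) us)"
      by simp
  qed
  also have "\<dots> = real k ^ l * (\<Sum>us\<in>LS {0..n} l. ?H us * PL (bary n xt) us)"
    by (simp add: sum_distrib_left mult_ac)
  finally have V: "(\<Sum>s\<in>?All. ?H (map (nth ts) s)) = real k ^ l * (\<Sum>us\<in>LS {0..n} l. ?H us * PL (bary n xt) us)" .
  have Vge: "real k ^ l * pm \<le> (\<Sum>s\<in>?All. ?H (map (nth ts) s))"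
    unfolding V using pmle xts by (intro mult_left_mono) auto
  have fA: "finite ?All" by (rule finite_LS) simp
  have IA: "Inj k l \<subseteq> ?All" by (rule Inj_sub)
  have Hle: "?H (map (nth ts) s) \<le> M" if "s \<in> ?All" for s
  proof -
    have "map (nth ts) s \<in> LS {0..n} l"
      using that st lt by (auto simp: LS_def dest!: subsetD[OF st] intro!: nth_mem)
    hence "cnt (map (nth ts) s) \<in> multi_idx n l" by (rule cnt_multi_idx)
    thus ?thesis using bM by fastforce
  qed
  have M0: "0 \<le> M"
  proof -
    have "unit_mult l 0 \<in> multi_idx n l" by (rule unit_mult_idx) simp
    thus ?thesis using bM by fastforce
  qed
  have cA: "card ?All = k ^ l" using card_LS[of "{..<k}" l] by simp
  have cI: "card (Inj k l) = \<Prod>{k - l + 1..k}" by (rule card_Inj[OF lk])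
  have cD: "real (card (?All - Inj k l)) = real k ^ l - real (\<Prod>{k - l + 1..k})"
  proof -
    have "card (?All - Inj k l) = card ?All - card (Inj k l)" by (rule card_Diff_subset[OF finite_Inj IA])
    moreover have "card (Inj k l) \<le> card ?All" by (rule card_mono[OF fA IA])
    ultimately show ?thesis using cA cI by (simp add: of_nat_diff)
  qed
  have sD: "(\<Sum>s\<in>?All - Inj k l. ?H (map (nth ts) s)) \<le> real (card (?All - Inj k l)) * M"
    by (rule sum_bounded_above) (use Hle in auto)
  have split: "(\<Sum>s\<in>Inj k l. ?H (map (nth ts) s)) = (\<Sum>s\<in>?All. ?H (map (nth ts) s)) - (\<Sum>s\<in>?All - Inj k l. ?H (map (nth ts) s))"
    using sum_diff[OF fA IA, of "\<lambda>s. ?H (map (nth ts) s)"] by linarith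
  have W: "real k ^ l - real (\<Prod>{k - l + 1..k}) \<le> real (l * (l - 1)) / 2 * real k ^ (l - 1)"
    using weierstrass_count[OF lk] by linarith
  have "real (card (?All - Inj k l)) * M \<le> real (l * (l - 1)) / 2 * real k ^ (l - 1) * M"
    unfolding cD using W M0 by (rule mult_right_mono)
  hence lb: "real k ^ l * pm - real (l * (l - 1)) / 2 * real k ^ (l - 1) * M \<le> (\<Sum>s\<in>Inj k l. ?H (map (nth ts) s))"
    using split Vge sD by linarith
  have "0 < real k ^ l * pm - real (l * (l - 1)) / 2 * real k ^ (l - 1) * M"
  proof (cases l)
    case 0 thus ?thesis using pm0 by simp
  next
    case (Suc l')
    have kp: "0 < real k ^ l'" using k0 by simp
    have "real (l * (l - 1)) / 2 * real k ^ (l - 1) * M = real k ^ l' * (real (l * (l - 1)) / 2 * M)"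
      using Suc by simp
    also have "\<dots> < real k ^ l' * (real k * pm)" using key kp by (rule mult_strict_left_mono)
    also have "\<dots> = real k ^ l * pm" using Suc by simp
    finally show ?thesis by simp
  qed
  thus ?thesis using lb by linarith
qed

theorem corollary5p15:
  fixes n l k :: nat and p q :: "(nat \<Rightarrow> nat) \<Rightarrow> real"
  assumes "is_poly n l p" and "is_poly n l q"
    and "\<forall>x\<in>simplex n. 0 < peval n p x / peval n q x"
    and "\<forall>x\<in>simplex n. 0 < peval n p x"
    and "\<forall>j\<ge>l. \<forall>\<alpha>\<in>multi_idx n j. 0 < bern_coeff n q j \<alpha>"
    and "real k > max
           (omega n l p q / (INF x\<in>simplex n. peval n p x / peval n q x) + 1)
           (real (l * (l - 1)) / 2 * Max ((\<lambda>\<alpha>. \<bar>bern_coeff n p l \<alpha>\<bar>) ` multi_idx n l)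
              / (INF x\<in>simplex n. peval n p x))"
  shows "Cert n k (bern_coeff_f n p q k)"
proof -
  define b where "b = bern_coeff n p l"
  define M where "M = Max ((\<lambda>\<alpha>. \<bar>b \<alpha>\<bar>) ` multi_idx n l)"
  define pm where "pm = (INF x\<in>simplex n. peval n p x)"
  have pseq: "peval n p x = (\<Sum>us\<in>LS {0..n} l. b (cnt us) * PL (bary n x) us)" for x
    using bern_coeff_prop[OF assms(1)] bern_sym[of b n l x] by (simp add: b_def)
  obtain x0 where x0: "x0 \<in> simplex n" "\<forall>x\<in>simplex n. peval n p x0 \<le> peval n p x"
    "pm = peval n p x0"
    using simplex_min[OF assms(1)] pm_def by metis
  have pm0: "0 < pm" using x0 assms(4) by simp
  have pmle: "\<forall>x\<in>simplex n. pm \<le> (\<Sum>us\<in>LS {0..n} l. b (cnt us) * PL (bary n x) us)"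
    using x0 pseq by simp
  have bM: "\<forall>\<alpha>\<in>multi_idx n l. \<bar>b \<alpha>\<bar> \<le> M"
    unfolding M_def using finite_multi_idx by (auto intro: Max_ge)
  have pmM: "pm \<le> M"
  proof -
    have "pm = (\<Sum>us\<in>LS {0..n} l. b (cnt us) * PL (bary n x0) us)" using x0 pseq by simp
    also have "\<dots> \<le> (\<Sum>us\<in>LS {0..n} l. M * PL (bary n x0) us)"
    proof (rule sum_mono)
      fix us assume us: "us \<in> LS {0..n} l"
      have "0 \<le> PL (bary n x0) us" using us x0(1) by (intro PL_nonneg) (auto simp: LS_def bary_nonneg)
      moreover have "b (cnt us) \<le> M" using bM cnt_multi_idx[OF us] by fastforce
      ultimately show "b (cnt us) * PL (bary n x0) us \<le> M * PL (bary n x0) us"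
        by (rule mult_right_mono[rotated])
    qed
    also have "\<dots> = M" by (simp add: sum_distrib_left[symmetric] sum_PL_LS bary_sum)
    finally show ?thesis .
  qed
  have hk2: "real (l * (l - 1)) / 2 * M / pm < real k" using assms(6) by (simp add: M_def pm_def b_def)
  hence key: "real (l * (l - 1)) / 2 * M < real k * pm" using pm0 by (simp add: divide_less_eq)
  have kl: "l \<le> k \<and> 0 < k"
  proof (cases "l \<le> 1")
    case True
    hence "l * (l - 1) = 0" by (cases l) auto
    hence "omega n l p q = 0" by (simp add: omega_def Let_def)
    hence "1 < real k" using assms(6) by simp
    thus ?thesis using True by simp
  next
    case False
    have "1 \<le> M / pm" using pmM pm0 by simp
    have r0: "0 \<le> real (l * (l - 1)) / 2" by simp
    have "real (l * (l - 1)) / 2 \<le> real (l * (l - 1)) / 2 * (M / pm)"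
      using mult_left_mono[OF \<open>1 \<le> M / pm\<close> r0] by simp
    also have "\<dots> < real k" using hk2 by simp
    finally have a: "real (l * (l - 1)) / 2 < real k" .
    have "real l - 1 \<le> real (l * (l - 1)) / 2"
    proof -
      have "2 * (l - 1) \<le> l * (l - 1)" using False by simp
      hence "real (2 * (l - 1)) \<le> real (l * (l - 1))" by (simp only: of_nat_le_iff)
      thus ?thesis using False by (simp add: of_nat_diff)
    qed
    hence "real l - 1 < real k" using a by linarith
    thus ?thesis using False by simp
  qed
  hence lk: "l \<le> k" and k0: "0 < k" by auto
  define G where "G ts = (\<Sum>s\<in>Inj k l. b (cnt (map (nth ts) s))) / real (card (Inj k l))" for ts
  have Gpos: "0 < G ts" if "ts \<in> LS {0..n} k" for ts
  proof -
    have "0 < (\<Sum>s\<in>Inj k l. b (cnt (map (nth ts) s)))"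
      by (rule inj_sum_pos[OF that lk k0 pm0 pmle bM key])
    moreover have "0 < real (card (Inj k l))" using card_Inj_pos[OF lk] by simp
    ultimately show ?thesis unfolding G_def by simp
  qed
  define b' where "b' \<alpha> = (if \<alpha> \<in> multi_idx n k then avg n k G \<alpha> else 0)" for \<alpha>
  have b'prop: "\<forall>x. peval n p x = (\<Sum>\<alpha>\<in>multi_idx n k. b' \<alpha> * bernstein n k \<alpha> x)"
  proof
    fix x
    have "peval n p x = (\<Sum>ts\<in>LS {0..n} k. G ts * PL (bary n x) ts)"
      unfolding G_def pseq using elev_identity[OF lk, of "\<lambda>us. b (cnt us)" n x] by simp
    also have "\<dots> = (\<Sum>\<alpha>\<in>multi_idx n k. avg n k G \<alpha> * bernstein n k \<alpha> x)" by (rule bern_avg)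
    also have "\<dots> = (\<Sum>\<alpha>\<in>multi_idx n k. b' \<alpha> * bernstein n k \<alpha> x)"
      by (intro sum.cong refl) (simp add: b'_def)
    finally show "peval n p x = (\<Sum>\<alpha>\<in>multi_idx n k. b' \<alpha> * bernstein n k \<alpha> x)" .
  qed
  have bk: "bern_coeff n p k = b'"
    by (rule bern_coeff_eqI) (use b'prop in \<open>auto simp: b'_def\<close>)
  have b'pos: "0 < b' \<alpha>" if a: "\<alpha> \<in> multi_idx n k" for \<alpha>
  proof -
    have "0 < (\<Sum>ts\<in>fib n k \<alpha>. G ts)"
    proof (rule sum_pos[OF finite_fib])
      show "fib n k \<alpha> \<noteq> {}" using wl_fib[OF a] by blast
      show "\<And>ts. ts \<in> fib n k \<alpha> \<Longrightarrow> 0 < G ts" using Gpos by (auto simp: fib_def)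
    qed
    moreover have "0 < real (card (fib n k \<alpha>))" using card_fib_pos[OF a] by simp
    ultimately show ?thesis using a by (simp add: b'_def avg_def)
  qed
  have qpos: "0 < bern_coeff n q k \<alpha>" if "\<alpha> \<in> multi_idx n k" for \<alpha>
    using assms(5) lk that by blast
  have pos: "0 < bern_coeff_f n p q k \<alpha>" if "\<alpha> \<in> multi_idx n k" for \<alpha>
    unfolding bern_coeff_f_def bk using b'pos[OF that] qpos[OF that] by simp
  show ?thesis unfolding Cert_def
    using pos unit_mult_idx by (auto intro: less_imp_le)
qed

end
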